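(* Let $n=2^k$ with $k\ge 2$ an integer. If an $n\times n$ matrix $\Sigma$ with entries $\pm1$ has vanishing permanent, then the number $\mu(\Sigma)$ of entries of $\Sigma$ equal to $-1$ is even.
   Context: The permanent of $\Sigma=[\sigma_{ij}]$ is $\sum_{\lambda\in\mathrm{Sym}(n)}\sigma_{1,\lambda(1)}\cdots\sigma_{n,\lambda(n)}$. *)

theory Defs
  imports Main "HOL-Combinatorics.Permutations"
begin

definition permanent :: "nat \<Rightarrow> (nat \<Rightarrow> nat \<Rightarrow> int) \<Rightarrow> int" where
  "permanent n A = (\<Sum>p\<in>{p. p permutes {..<n}}. \<Prod>i<n. A i (p i))"

definition mu :: "nat \<Rightarrow> (nat \<Rightarrow> nat \<Rightarrow> int) \<Rightarrow> nat" where
  "mu n A = card {(i, j). i < n \<and> j < n \<and> A i j = -1}"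

end

theory Submission
  imports Defs
begin

fun pc :: "nat \<Rightarrow> nat" where
  "pc n = (if n = 0 then 0 else n mod 2 + pc (n div 2))"
declare pc.simps[simp del]
lemma pc_0[simp]: "pc 0 = 0" by (simp add: pc.simps[of 0])
lemma pc_1[simp]: "pc (Suc 0) = Suc 0" by (simp add: pc.simps[of "Suc 0"])

lemma pc_double: "pc (2*m) = pc m"
  by (cases "m = 0") (simp_all add: pc.simps[of "2*m"] pc.simps[of 0])
lemma pc_double1[simp]: "pc (Suc (2*m)) = Suc (pc m)"
  by (simp add: pc.simps[of "Suc (2*m)"])

lemma pc_le: "pc r \<le> r"
proof (induction r rule: less_induct)
  case (less r)
  show ?case
  proof (cases "r = 0")
    case True then show ?thesis by simp
  next
    case False
    then have "r div 2 < r" by simp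
    with less have "pc (r div 2) \<le> r div 2" by blast
    with False show ?thesis by (simp add: pc.simps[of r])
  qed
qed

lemma fact_double: "fact (2*m) = (2::int)^m * fact m * (\<Prod>i<m. 2*int i+1)"
proof (induction m)
  case 0 then show ?case by simp
next
  case (Suc m)
  have "fact (2*Suc m) = (int (2*m+2)) * (int (2*m+1)) * (fact (2*m) :: int)"
    by (simp add: fact_Suc algebra_simps)
  also have "\<dots> = (int (2*m+2)) * (int (2*m+1)) * ((2::int)^m * fact m * (\<Prod>i<m. 2*int i+1))"
    using Suc by simp
  also have "\<dots> = 2^(Suc m) * (int (m+1) * fact m) * ((\<Prod>i<m. 2*int i+1) * (2*int m+1))"
    by (simp add: algebra_simps)
  also have "\<dots> = 2^(Suc m) * fact (Suc m) * (\<Prod>i<Suc m. 2*int i+1)"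
    by (simp add: fact_Suc)
  finally show ?case .
qed

lemma fact_pc: "\<exists>q. odd q \<and> fact r = (2::int)^(r - pc r) * q"
proof (induction r rule: less_induct)
  case (less r)
  define m where "m = r div 2"
  define b where "b = r mod 2"
  have r: "r = 2*m + b" unfolding m_def b_def by simp
  have b: "b = 0 \<or> b = 1" unfolding b_def by presburger
  show ?case
  proof (cases "m = 0")
    case True
    with b r show ?thesis by auto
  next
    case False
    then have "m < r" using r by simp
    with less obtain q where q: "odd q" "fact m = (2::int)^(m - pc m) * q" by blast
    have op: "odd (\<Prod>i<m. 2*int i+1)" by (induction m) auto  
    have pm: "pc m \<le> m" by (rule pc_le)
    have e: "2*m - pc (2*m) = m + (m - pc m)" using pm pc_double by simp
    have f2: "fact (2*m) = (2::int)^(2*m - pc (2*m)) * (q * (\<Prod>i<m. 2*int i+1))"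
      unfolding e power_add fact_double q(2) by (simp only: ac_simps)
    show ?thesis
    proof (cases "b = 0")
      case True then show ?thesis using r f2 q op by auto
    next
      case False
      then have "b = 1" using b by simp
      then have r1: "r = Suc (2*m)" using r by simp
      have e1: "r - pc r = 2*m - pc (2*m)" unfolding r1 using pc_double by simp
      have "fact r = (2::int)^(r - pc r) * (int (2*m+1) * (q * (\<Prod>i<m. 2*int i+1)))"
        unfolding e1 unfolding r1 fact_Suc f2 by (simp add: ac_simps)
      then show ?thesis using q op by auto
    qed
  qed
qed

lemma pc_lt_pow: "r < 2^j \<Longrightarrow> pc r \<le> j"
proof (induction j arbitrary: r)
  case 0 then show ?case by simp
next
  case (Suc j)
  show ?case
  proof (cases "r = 0")
    case True then show ?thesis by simp
  next
    case False
    have "r div 2 < 2^j" using Suc.prems by simp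
    then have "pc (r div 2) \<le> j" by (rule Suc.IH)
    with False show ?thesis by (simp add: pc.simps[of r])
  qed
qed

lemma pc_small: "r + 1 < 2^(Suc j) \<Longrightarrow> pc r \<le> j"
proof (induction j arbitrary: r)
  case 0 then show ?case by simp
next
  case (Suc j)
  show ?case
  proof (cases "even r")
    case True
    then obtain m where m: "r = 2*m" by blast
    then have "m < 2^Suc j" using Suc.prems by simp
    then show ?thesis using m pc_double pc_lt_pow by simp
  next
    case False
    then obtain m where m: "r = 2*m+1" using oddE by blast
    then have "m + 1 < 2^Suc j" using Suc.prems by simp
    then show ?thesis using m pc_double1 Suc.IH by simp
  qed
qed

lemma pc_pow_minus1: "pc (2^k - 1) = k"
proof (induction k)
  case 0 then show ?case by simp
next
  case (Suc k)
  have "(2::nat)^k \<ge> 1" by simp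
  then obtain x where "(2::nat)^k = Suc x" by (metis Suc_pred less_eq_Suc_le One_nat_def)
  then have "(2::nat)^Suc k - 1 = 2*(2^k - 1) + 1" by simp
  then show ?case using Suc pc_double1 by simp
qed

lemma fact_dvd: "r + 1 < 2^(Suc j) \<Longrightarrow> (2::int)^(r - j) dvd fact r"
proof -
  assume a: "r + 1 < 2^(Suc j)"
  obtain q where "fact r = (2::int)^(r - pc r) * q" using fact_pc by blast
  moreover have "r - j \<le> r - pc r" using pc_small[OF a] by simp
  ultimately show ?thesis by (simp add: le_imp_power_dvd)
qed

definition bijs :: "nat set \<Rightarrow> nat set \<Rightarrow> (nat \<Rightarrow> nat) set" where
  "bijs R C = {f. bij_betw f R C \<and> (\<forall>x. x \<notin> R \<longrightarrow> f x = x)}"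

definition per :: "nat set \<Rightarrow> nat set \<Rightarrow> (nat \<Rightarrow> nat \<Rightarrow> int) \<Rightarrow> int" where
  "per R C A = (\<Sum>f\<in>bijs R C. \<Prod>i\<in>R. A i (f i))"

lemma finite_bijs:
  assumes "finite R" "finite C" shows "finite (bijs R C)"
proof -
  let ?G = "{g. \<forall>x. (x \<in> R \<longrightarrow> g x \<in> C) \<and> (x \<notin> R \<longrightarrow> g x = 0)}"
  have "finite ?G" by (rule finite_set_of_finite_funs[OF assms])
  moreover have "bijs R C \<subseteq> (\<lambda>g x. if x \<in> R then g x else x) ` ?G"
  proof
    fix f assume f: "f \<in> bijs R C"
    then have e: "(\<lambda>g x. if x \<in> R then g x else x) (\<lambda>x. if x \<in> R then f x else 0) = f"
      by (auto simp: bijs_def)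
    have m: "(\<lambda>x. if x \<in> R then f x else 0) \<in> ?G"
      using f by (auto simp: bijs_def bij_betw_def)
    show "f \<in> (\<lambda>g x. if x \<in> R then g x else x) ` ?G" using image_eqI[where f="\<lambda>g x. if x \<in> R then g x else x" and x="\<lambda>x. if x \<in> R then f x else 0" and A="?G", OF e[symmetric] m] .
  qed
  ultimately show ?thesis by (rule finite_surj)
qed

lemma per_cong:
  assumes "\<And>x y. x \<in> R \<Longrightarrow> y \<in> C \<Longrightarrow> A x y = B x y"
  shows "per R C A = per R C B"
  unfolding per_def
proof (rule sum.cong[OF refl], rule prod.cong[OF refl])
  fix f x assume "f \<in> bijs R C" "x \<in> R"
  then have "f x \<in> C" by (auto simp: bijs_def bij_betw_def)
  with \<open>x \<in> R\<close> show "A x (f x) = B x (f x)" by (rule assms)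
qed

lemma bijs_empty: "bijs {} {} = {id}"
  by (auto simp: bijs_def)

lemma per_empty: "per {} {} A = 1"
  by (simp add: per_def bijs_empty)

lemma bijs_insert:
  assumes "i \<in> R" "j \<in> C" "g \<in> bijs (R - {i}) (C - {j})"
  shows "g(i := j) \<in> bijs R C"
proof -
  have gi: "g i = i" using assms by (auto simp: bijs_def)
  have b: "bij_betw g (R - {i}) (C - {j})" using assms by (auto simp: bijs_def)
  have "bij_betw (g(i := j)) (R - {i}) (C - {j})"
    using b by (rule bij_betw_cong[THEN iffD1, rotated]) auto
  then have "bij_betw (g(i := j)) ((R - {i}) \<union> {i}) ((C - {j}) \<union> {(g(i := j)) i})"
    by (rule notIn_Un_bij_betw3[THEN iffD1, rotated 2]) auto
  then have "bij_betw (g(i := j)) R C" using assms by (simp add: insert_absorb)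
  then show ?thesis using assms by (auto simp: bijs_def)
qed

lemma bijs_remove:
  assumes "i \<in> R" "f \<in> bijs R C"
  shows "f i \<in> C" "f(i := i) \<in> bijs (R - {i}) (C - {f i})"
proof -
  have b: "bij_betw f R C" and o: "\<And>x. x \<notin> R \<Longrightarrow> f x = x" using assms by (auto simp: bijs_def)
  show "f i \<in> C" using b assms by (auto simp: bij_betw_def)
  have "bij_betw f (R - {i}) (C - {f i})" using bij_betw_DiffI[OF b, of "{i}" "{f i}"] assms b
    by (auto simp: bij_betw_def)
  then have "bij_betw (f(i := i)) (R - {i}) (C - {f i})"
    by (rule bij_betw_cong[THEN iffD1, rotated]) auto
  then show "f(i := i) \<in> bijs (R - {i}) (C - {f i})" using o by (auto simp: bijs_def)
qed

lemma per_expand: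
  assumes "finite R" "finite C" "i \<in> R"
  shows "per R C A = (\<Sum>j\<in>C. A i j * per (R - {i}) (C - {j}) A)"
proof -
  let ?T = "Sigma C (\<lambda>j. bijs (R - {i}) (C - {j}))"
  have "(\<Sum>j\<in>C. A i j * per (R - {i}) (C - {j}) A)
      = (\<Sum>j\<in>C. \<Sum>g\<in>bijs (R - {i}) (C - {j}). A i j * (\<Prod>x\<in>R - {i}. A x (g x)))"
    by (simp add: per_def sum_distrib_left)
  also have "\<dots> = (\<Sum>(j, g)\<in>?T. A i j * (\<Prod>x\<in>R - {i}. A x (g x)))"
    by (rule sum.Sigma) (use assms finite_bijs in auto)
  also have "\<dots> = per R C A"
    unfolding per_def
  proof (rule sym, rule sum.reindex_bij_witness[where i="\<lambda>(j, g). g(i := j)" and j="\<lambda>f. (f i, f(i := i))"], goal_cases)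
    case (1 f) then show ?case by auto
  next
    case (2 f) then show ?case using bijs_remove[OF assms(3)] by auto
  next
    case (3 p)
    then obtain j g where p: "p = (j, g)" "j \<in> C" "g \<in> bijs (R - {i}) (C - {j})" by auto
    then have "g i = i" by (auto simp: bijs_def)
    then show ?case using p by auto
  next
    case (4 p)
    then show ?case using bijs_insert[OF assms(3)] by auto
  next
    case (5 f)
    have "(\<Prod>x\<in>R. A x (f x)) = A i (f i) * (\<Prod>x\<in>R - {i}. A x (f x))"
      using assms by (simp add: prod.remove)
    also have "(\<Prod>x\<in>R - {i}. A x (f x)) = (\<Prod>x\<in>R - {i}. A x ((f(i := i)) x))"
      by (rule prod.cong) auto
    finally show ?case by simp
  qed
  finally show ?thesis ..
qed

definition cnt :: "nat set \<Rightarrow> nat set \<Rightarrow> (nat \<Rightarrow> nat \<Rightarrow> int) \<Rightarrow> nat" where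
  "cnt R C A = card {(x, y). x \<in> R \<and> y \<in> C \<and> A x y = -1}"

definition pm :: "nat set \<Rightarrow> nat set \<Rightarrow> (nat \<Rightarrow> nat \<Rightarrow> int) \<Rightarrow> bool" where
  "pm R C A \<longleftrightarrow> (\<forall>x\<in>R. \<forall>y\<in>C. A x y = 1 \<or> A x y = -1)"

lemma per_flip:
  assumes "finite R" "finite C" "i \<in> R" "j \<in> C"
  shows "per R C A = per R C (A(i := (A i)(j := 1))) + (A i j - 1) * per (R - {i}) (C - {j}) A"
proof -
  let ?B = "A(i := (A i)(j := 1))"
  have m: "per (R - {i}) (C - {j'}) ?B = per (R - {i}) (C - {j'}) A" for j'
    by (rule per_cong) auto
  have "per R C A = A i j * per (R - {i}) (C - {j}) A + (\<Sum>j'\<in>C - {j}. A i j' * per (R - {i}) (C - {j'}) A)"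
    using assms by (simp add: per_expand sum.remove)
  moreover have "per R C ?B = 1 * per (R - {i}) (C - {j}) A + (\<Sum>j'\<in>C - {j}. A i j' * per (R - {i}) (C - {j'}) A)"
    using assms by (simp add: per_expand[of R C i] sum.remove m)
  ultimately show ?thesis by (simp add: algebra_simps)
qed

lemma per_ones:
  assumes "finite R" "finite C" "card R = card C" "\<And>x y. x \<in> R \<Longrightarrow> y \<in> C \<Longrightarrow> A x y = 1"
  shows "per R C A = fact (card R)"
  using assms
proof (induction "card R" arbitrary: R C)
  case 0
  then have "R = {}" "C = {}" by auto
  then show ?case by (simp add: per_empty)
next
  case (Suc m)
  then obtain i where i: "i \<in> R" by (metis card.empty ex_in_conv nat.simps(3))
  have "per R C A = (\<Sum>j\<in>C. A i j * per (R - {i}) (C - {j}) A)"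
    using Suc.prems i by (simp add: per_expand)
  also have "\<dots> = (\<Sum>j\<in>C. fact m)"
  proof (rule sum.cong[OF refl])
    fix j assume j: "j \<in> C"
    have "per (R - {i}) (C - {j}) A = fact (card (R - {i}))"
      by (rule Suc.hyps(1)) (use Suc.prems Suc.hyps(2) i j in auto)
    moreover have "card (R - {i}) = m" using Suc.hyps(2) i Suc.prems by simp
    ultimately show "A i j * per (R - {i}) (C - {j}) A = fact m"
      using Suc.prems i j by simp
  qed
  also have "\<dots> = fact (card R)" using Suc.hyps(2) Suc.prems by (metis fact_Suc of_nat_fact sum_constant of_nat_mult)
  finally show ?case .
qed

lemma flip:
  assumes fin: "finite R" "finite C" and cR: "card R = Suc m" and cC: "card C = Suc m"
    and IH: "\<And>R' C' B. finite R' \<Longrightarrow> finite C' \<Longrightarrow> card R' = m \<Longrightarrow> card C' = m \<Longrightarrow> pm R' C' B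
              \<Longrightarrow> (2::int)^e dvd (per R' C' B - fact m)"
  shows "pm R C A \<Longrightarrow> (2::int)^(Suc e) dvd (per R C A - fact (Suc m) + 2 * int (cnt R C A) * fact m)"
proof (induction "cnt R C A" arbitrary: A)
  case 0
  have "finite {(x, y). x \<in> R \<and> y \<in> C \<and> A x y = -1}"
    by (rule finite_subset[of _ "R \<times> C"]) (use fin in auto)
  with 0 have "\<And>x y. x \<in> R \<Longrightarrow> y \<in> C \<Longrightarrow> A x y = 1"
    by (auto simp: cnt_def pm_def)
  then have "per R C A = fact (Suc m)" using per_ones[OF fin] cR cC by simp
  with 0 show ?case by simp
next
  case (Suc c)
  let ?S = "{(x, y). x \<in> R \<and> y \<in> C \<and> A x y = -1}"
  have finS: "finite ?S" by (rule finite_subset[of _ "R \<times> C"]) (use fin in auto)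
  from Suc.hyps(2) have "card ?S \<noteq> 0" by (simp add: cnt_def)
  then have "?S \<noteq> {}" by (metis card.empty)
  then obtain i j where ij: "i \<in> R" "j \<in> C" "A i j = -1" by auto
  let ?B = "A(i := (A i)(j := 1))"
  have SB: "{(x, y). x \<in> R \<and> y \<in> C \<and> ?B x y = -1} = ?S - {(i, j)}" by (auto split: if_splits)
  have cB: "c = cnt R C ?B" using Suc.hyps(2) ij finS unfolding cnt_def SB by simp
  have pB: "pm R C ?B" using Suc.prems by (auto simp: pm_def)
  have h1: "(2::int)^(Suc e) dvd (per R C ?B - fact (Suc m) + 2 * int c * fact m)"
    using Suc.hyps(1)[OF cB pB] cB by simp
  let ?M = "per (R - {i}) (C - {j}) A"
  have pmM: "pm (R - {i}) (C - {j}) A" using Suc.prems by (auto simp: pm_def)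
  have "(2::int)^e dvd (?M - fact m)"
    by (rule IH) (use fin cR cC ij pmM in auto)
  then have h2: "(2::int)^(Suc e) dvd (2 * (?M - fact m))" by (simp only: power_Suc mult_dvd_mono dvd_refl)
  have eq: "per R C A = per R C ?B - 2 * ?M" using per_flip[OF fin ij(1,2), of A] ij by simp
  have "per R C A - fact (Suc m) + 2 * int (Suc c) * fact m
      = (per R C ?B - fact (Suc m) + 2 * int c * fact m) - 2 * (?M - fact m)"
    unfolding eq by (simp add: algebra_simps)
  then show ?case using h1 h2 Suc.hyps(2) by (metis dvd_diff)
qed

lemma G:
  "m < 2^(Suc j) \<Longrightarrow> finite R \<Longrightarrow> finite C \<Longrightarrow> card R = m \<Longrightarrow> card C = m \<Longrightarrow> pm R C A
   \<Longrightarrow> (2::int)^(m - j) dvd (per R C A - fact m)"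
proof (induction m arbitrary: R C A)
  case 0
  then have "R = {}" "C = {}" by auto
  then show ?case by (simp add: per_empty)
next
  case (Suc m)
  have IH: "\<And>R' C' B. finite R' \<Longrightarrow> finite C' \<Longrightarrow> card R' = m \<Longrightarrow> card C' = m \<Longrightarrow> pm R' C' B
              \<Longrightarrow> (2::int)^(m - j) dvd (per R' C' B - fact m)"
    using Suc.IH Suc.prems(1) by simp
  have h: "(2::int)^(Suc (m - j)) dvd (per R C A - fact (Suc m) + 2 * int (cnt R C A) * fact m)"
    by (rule flip[OF Suc.prems(2,3,4,5) IH Suc.prems(6)])
  have "(2::int)^(m - j) dvd fact m" by (rule fact_dvd) (use Suc.prems(1) in simp)
  then have h2: "(2::int)^(Suc (m - j)) dvd 2 * int (cnt R C A) * fact m"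
    by (simp add: mult.assoc mult_dvd_mono)
  have "(2::int)^(Suc (m - j)) dvd (per R C A - fact (Suc m))"
    using dvd_diff[OF h h2] by simp
  moreover have "(2::int)^(Suc m - j) dvd 2^(Suc (m - j))" by (rule le_imp_power_dvd) simp
  ultimately show ?case using dvd_trans by blast
qed

theorem proposition3p5:
  fixes k n :: nat and \<Sigma> :: "nat \<Rightarrow> nat \<Rightarrow> int"
  assumes "k \<ge> 2" and "n = 2 ^ k"
    and "\<And>i j. i < n \<Longrightarrow> j < n \<Longrightarrow> \<Sigma> i j = 1 \<or> \<Sigma> i j = -1"
    and "permanent n \<Sigma> = 0"
  shows "even (mu n \<Sigma>)"
proof -
  define m where "m = n - 1"
  have kn: "k < n" using assms(2) by (simp add: less_exp)
  have nm: "n = Suc m" using kn m_def by simp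
  have bs: "bijs {..<n} {..<n} = {p. p permutes {..<n}}"
    by (auto simp: bijs_def permutes_imp_bij intro: bij_imp_permutes) (auto simp: permutes_def)
  have per0: "per {..<n} {..<n} \<Sigma> = 0"
    using assms(4) by (simp add: per_def permanent_def bs atLeast0LessThan)
  have mu: "mu n \<Sigma> = cnt {..<n} {..<n} \<Sigma>" by (simp add: mu_def cnt_def)
  have pmS: "pm {..<n} {..<n} \<Sigma>" using assms(3) by (auto simp: pm_def)
  have IH: "\<And>R' C' B. finite R' \<Longrightarrow> finite C' \<Longrightarrow> card R' = m \<Longrightarrow> card C' = m \<Longrightarrow> pm R' C' B
              \<Longrightarrow> (2::int)^(n - k) dvd (per R' C' B - fact m)"
  proof -
    fix R' C' B assume a: "finite R'" "finite C'" "card R' = m" "card C' = m" "pm R' C' B"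
    have "m < 2^(Suc (k - 1))" using assms(1,2) m_def by simp
    from G[OF this a] have "(2::int)^(m - (k - 1)) dvd (per R' C' B - fact m)" .
    moreover have "m - (k - 1) = n - k" using kn m_def assms(1) by simp
    ultimately show "(2::int)^(n - k) dvd (per R' C' B - fact m)" by simp
  qed
  have h: "(2::int)^(Suc (n - k)) dvd (per {..<n} {..<n} \<Sigma> - fact (Suc m) + 2 * int (mu n \<Sigma>) * fact m)"
    unfolding mu by (rule flip[OF _ _ _ _ IH pmS]) (use nm in auto)
  obtain q where q: "odd q" "fact m = (2::int)^(m - pc m) * q" using fact_pc by blast
  have pcm: "pc m = k" using pc_pow_minus1 assms(2) m_def by simp
  have e1: "fact (Suc m) = (2::int)^(n - k) * (2^(k-1) * q)"
  proof -
    have nk: "int (Suc m) = (2::int)^k" using nm assms(2) by (metis of_nat_numeral of_nat_power)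
    have "fact (Suc m) = (2::int)^k * (2^(m - k) * q)" unfolding fact_Suc of_nat_mult nk q pcm by simp
    also have "\<dots> = 2^(k + (m - k)) * q" by (simp add: power_add)
    also have "k + (m - k) = (n - k) + (k - 1)" using kn nm assms(1) by simp
    finally show ?thesis by (simp add: power_add)
  qed
  have e2: "2 * int (mu n \<Sigma>) * fact m = (2::int)^(n - k) * (int (mu n \<Sigma>) * q)"
  proof -
    have "2 * int (mu n \<Sigma>) * fact m = 2^(Suc (m - k)) * (int (mu n \<Sigma>) * q)"
      using q pcm by simp
    also have "Suc (m - k) = n - k" using kn nm by simp
    finally show ?thesis .
  qed
  have "(2::int)^(n - k) * 2 dvd (2::int)^(n - k) * (q * (int (mu n \<Sigma>) - 2^(k-1)))"
    using h unfolding per0 e1 e2 by (simp add: algebra_simps)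
  then have "even (q * (int (mu n \<Sigma>) - 2^(k-1)))" by simp
  then have "even (int (mu n \<Sigma>) - 2^(k-1))" using q(1) by simp
  moreover have "even ((2::int)^(k-1))" using assms(1) by simp
  ultimately have "even (int (mu n \<Sigma>) - 2^(k-1) + 2^(k-1))" by (simp only: even_add)
  then have "even (int (mu n \<Sigma>))" by simp
  then show ?thesis by simp
qed
end
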